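(* Let $v_1,\dots,v_m\in\mathbb{R}^2$ and let $P$ be the polygonal path obtained by placing these vectors tip-to-tail in this order, i.e. the path with vertices $q_0=0$, $q_k=v_1+\dots+v_k$ ($1\le k\le m$) and edges $s_k=[q_{k-1},q_k]$. If $P$ has a crossing, then among $v_1,\dots,v_m$ there is a vector with positive first coordinate and one with negative first coordinate, and there is a vector with positive second coordinate and one with negative second coordinate.
   Context: A crossing of $P$ is a point where two non-consecutive edges $s_i,s_j$ ($|i-j|\ge 2$) intersect transversally, i.e. they meet at a single point lying in the interior of both edges, and the two edges are not parallel. Here the "first coordinate" is the $i$-component and the "second coordinate" is the $j$-component of the vector. *)

theory Defs
  imports "HOL-Analysis.Analysis"
begin

definition vertex :: "(nat \<Rightarrow> real^2) \<Rightarrow> nat \<Rightarrow> real^2" where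
  "vertex v k = (\<Sum>i\<in>{1..k}. v i)"

definition edge :: "(nat \<Rightarrow> real^2) \<Rightarrow> nat \<Rightarrow> (real^2) set" where
  "edge v k = closed_segment (vertex v (k - 1)) (vertex v k)"

definition parallel2 :: "real^2 \<Rightarrow> real^2 \<Rightarrow> bool" where
  "parallel2 a b \<longleftrightarrow> a$1 * b$2 - a$2 * b$1 = 0"

definition has_crossing :: "(nat \<Rightarrow> real^2) \<Rightarrow> nat \<Rightarrow> bool" where
  "has_crossing v m \<longleftrightarrow>
     (\<exists>i j p. 1 \<le> i \<and> i + 2 \<le> j \<and> j \<le> m \<and>
        edge v i \<inter> edge v j = {p} \<and>
        p \<in> open_segment (vertex v (i - 1)) (vertex v i) \<and>
        p \<in> open_segment (vertex v (j - 1)) (vertex v j) \<and>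
        \<not> parallel2 (v i) (v j))"

end

theory Submission
  imports Defs
begin

lemma core:
  fixes f :: "nat \<Rightarrow> real"
  assumes "1 \<le> i" "i + 2 \<le> j" "0 < s" "s < 1" "0 < t" "t < 1"
    and eq: "(\<Sum>k\<in>{1..<i}. f k) + s * f i = (\<Sum>k\<in>{1..<j}. f k) + t * f j"
    and nn: "\<forall>k\<in>{1..j}. f k \<ge> 0"
  shows "f i = 0 \<and> f j = 0"
proof -
  have "{1..<j} = {1..<i} \<union> {i} \<union> {Suc i..<j}" using assms by auto
  hence "(\<Sum>k\<in>{1..<j}. f k) = (\<Sum>k\<in>{1..<i}. f k) + f i + (\<Sum>k\<in>{Suc i..<j}. f k)"
    by (simp add: sum.union_disjoint)
  moreover have "(\<Sum>k\<in>{Suc i..<j}. f k) \<ge> 0" using nn by (intro sum_nonneg) auto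
  moreover have fi: "f i \<ge> 0" "f j \<ge> 0" using nn assms by auto
  ultimately have "(1 - s) * f i + t * f j \<le> 0" using eq by (simp add: algebra_simps)
  moreover have "(1 - s) * f i \<ge> 0" "t * f j \<ge> 0" using fi assms by auto
  ultimately have "(1 - s) * f i = 0" "t * f j = 0" by linarith+
  thus ?thesis using assms by auto
qed

lemma vertex_comp: "1 \<le> i \<Longrightarrow> vertex v (i - 1) $ c = (\<Sum>k\<in>{1..<i}. v k $ c)"
proof -
  assume "1 \<le> i"
  hence "{1..i-1} = {1..<i}" by auto
  thus ?thesis by (simp add: vertex_def sum_component)
qed

lemma vertex_diff: "1 \<le> i \<Longrightarrow> vertex v i - vertex v (i - 1) = v i"
proof -
  assume "1 \<le> i"
  then obtain n where "i = Suc n" by (cases i) auto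
  thus ?thesis by (simp add: vertex_def)
qed

lemma open_seg_pt:
  assumes "p \<in> open_segment (vertex v (i - 1)) (vertex v i)" "1 \<le> i"
  shows "\<exists>s. 0 < s \<and> s < 1 \<and> p = vertex v (i - 1) + s *\<^sub>R v i"
proof -
  obtain u where u: "0 < u" "u < 1" "p = (1 - u) *\<^sub>R vertex v (i - 1) + u *\<^sub>R vertex v i"
    using assms(1) by (auto simp: in_segment)
  have "p = vertex v (i - 1) + u *\<^sub>R (vertex v i - vertex v (i - 1))"
    using u(3) by (simp add: algebra_simps)
  thus ?thesis using u vertex_diff[OF assms(2), of v] by auto
qed

lemma coord_eq:
  assumes "1 \<le> i" "i + 2 \<le> j" "p = vertex v (i - 1) + s *\<^sub>R v i"
    "p = vertex v (j - 1) + t *\<^sub>R v j"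
  shows "(\<Sum>k\<in>{1..<i}. v k $ c) + s * v i $ c = (\<Sum>k\<in>{1..<j}. v k $ c) + t * v j $ c"
proof -
  have "p $ c = vertex v (i - 1) $ c + s * v i $ c" using assms(3) by simp
  moreover have "p $ c = vertex v (j - 1) $ c + t * v j $ c" using assms(4) by simp
  ultimately show ?thesis using vertex_comp[of i v c] vertex_comp[of j v c] assms(1,2) by simp
qed

theorem lemma2p1:
  fixes v :: "nat \<Rightarrow> real^2" and m :: nat
  assumes "has_crossing v m"
  shows "(\<exists>k\<in>{1..m}. v k $ 1 > 0) \<and> (\<exists>k\<in>{1..m}. v k $ 1 < 0) \<and>
         (\<exists>k\<in>{1..m}. v k $ 2 > 0) \<and> (\<exists>k\<in>{1..m}. v k $ 2 < 0)"
proof -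
  obtain i j p where ij: "1 \<le> i" "i + 2 \<le> j" "j \<le> m"
    and pi: "p \<in> open_segment (vertex v (i - 1)) (vertex v i)"
    and pj: "p \<in> open_segment (vertex v (j - 1)) (vertex v j)"
    and np: "\<not> parallel2 (v i) (v j)"
    using assms unfolding has_crossing_def by blast
  obtain s where s: "0 < s" "s < 1" "p = vertex v (i - 1) + s *\<^sub>R v i"
    using open_seg_pt[OF pi ij(1)] by blast
  obtain t where t: "0 < t" "t < 1" "p = vertex v (j - 1) + t *\<^sub>R v j"
    using open_seg_pt[OF pj] ij by fastforce
  have E: "\<And>c. (\<Sum>k\<in>{1..<i}. v k $ c) + s * v i $ c = (\<Sum>k\<in>{1..<j}. v k $ c) + t * v j $ c"
    using coord_eq[OF ij(1,2) s(3) t(3)] by blast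
  have E': "\<And>c. (\<Sum>k\<in>{1..<i}. - v k $ c) + s * (- v i $ c) = (\<Sum>k\<in>{1..<j}. - v k $ c) + t * (- v j $ c)"
    using E by (simp add: sum_negf) (metis add.commute minus_add_distrib diff_conv_add_uminus)
  have pos: "\<exists>k\<in>{1..m}. v k $ c > 0" for c
  proof (rule ccontr)
    assume "\<not> ?thesis"
    hence "\<forall>k\<in>{1..j}. - v k $ c \<ge> 0" using ij by (metis atLeastAtMost_iff le_trans not_le neg_0_le_iff_le)
    from core[OF ij(1,2) s(1,2) t(1,2) E' this] have "v i $ c = 0" "v j $ c = 0" by auto
    moreover have "c = 1 \<or> c = 2" by (metis exhaust_2 one_add_one)
    ultimately show False using np by (auto simp: parallel2_def)
  qed
  have neg: "\<exists>k\<in>{1..m}. v k $ c < 0" for c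
  proof (rule ccontr)
    assume "\<not> ?thesis"
    hence "\<forall>k\<in>{1..j}. v k $ c \<ge> 0" using ij by (metis atLeastAtMost_iff le_trans not_le)
    from core[OF ij(1,2) s(1,2) t(1,2) E this] have "v i $ c = 0" "v j $ c = 0" by auto
    moreover have "c = 1 \<or> c = 2" by (metis exhaust_2 one_add_one)
    ultimately show False using np by (auto simp: parallel2_def)
  qed
  show ?thesis using pos neg by blast
qed

end
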